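(* Consider the CSMA scheduler described in the context, and assume time-scale separation, i.e. at the first slot $t=nT$ of every super slot $n\ge 0$ the link schedule produced by the scheduler is distributed according to the stationary distribution of the Markov chain it induces for the current (fixed) weights. Let $0<\theta,\delta<1$ and let $\Phi_3^*(t)=\max\Phi_3(t)$, the maximum being over all feasible $(x_i(t),\mu_{mi}(t))$. If $$\Phi_3^*(t)\geq \frac{1}{\theta}\Big(|\mathcal{E}|\log 2+\log\frac{1}{\delta}\Big),$$ then at any slot $t=nT$, $n\ge 0$, with probability greater than $1-\delta$ the scheduler produces a schedule $\mu_{mi}(t)$ with $$\Phi_3(t)\geq (1-\theta)\,\Phi_3^*(t).$$
   Context: Setting: link set $\mathcal{E}$, each link $i$ with interference set $\mathcal{C}_i$; job types $\mathcal{M}$ with sizes $s_m$, $s^{max}=\max_m s_m$; nonnegative queue values $Q_{mi}(t),Z_{mi}(t)$ for $m\in\mathcal{M},i\in\mathcal{E}$. A feasible decision is $x_i(t)\in\{0,1\}$ with $x_i(t)+x_j(t)\le 1$ for all $j\in\mathcal{C}_i$, and $\mu_{mi}(t)\in\{0,1\}$ with $\sum_m\mu_{mi}(t)=x_i(t)$. Define $\Phi_3(t)=\sum_{m\in\mathcal{M}}\sum_{i\in\mathcal{E}}\mu_{mi}(t)\,[Q_{mi}(t)+Z_{mi}(t)]$, link weights $w_i(t)=\max_m\{Q_{mi}(t)+Z_{mi}(t)\}$ and $p_i=e^{w_i(t)}/(1+e^{w_i(t)})$. CSMA scheduler: time is divided into super slots of $T\ge s^{max}$ slots. At $t=nT$: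 (control phase) each link $i$ picks $T_i$ uniformly from $\{0,\dots,W-1\}$ (mini-slots); if it hears an INTENT message from a link in $\mathcal{C}_i$ before mini-slot $T_i+1$ it sets $z_i(t)=0$, otherwise it broadcasts INTENT at mini-slot $T_i+1$ and sets $z_i(t)=1$ if no collision, $z_i(t)=0$ if collision. (Scheduling phase) if $z_i(t)=0$ then $x_i(t)=x_i(t-1)$; if $z_i(t)=1$ and some $j\in\mathcal{C}_i$ had $x_j(t-1)=1$ then $x_i(t)=0$; otherwise $x_i(t)=1$ with probability $p_i$ and $0$ with probability $1-p_i$. An active link serves (sets $\mu_{mi}=1$ for) a job type maximizing $Q_{mi}(t)+Z_{mi}(t)$. At $t=nT+\tau$, $0<\tau<T$: $x_i(t)=x_i(nT)$; an active link continues an unfinished job of its current type, otherwise starts a job of a type $m$ maximizing $Q_{mi}(t)+Z_{mi}(t)$ among those with $(n+1)T-t\ge s_m$. *)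

theory Defs
  imports "HOL-Probability.Probability"
begin

definition weight :: "'m set \<Rightarrow> ('m \<Rightarrow> 'l \<Rightarrow> real) \<Rightarrow> ('m \<Rightarrow> 'l \<Rightarrow> real) \<Rightarrow> 'l \<Rightarrow> real" where
  "weight M Q Z i = Max ((\<lambda>m. Q m i + Z m i) ` M)"

definition act_prob :: "'m set \<Rightarrow> ('m \<Rightarrow> 'l \<Rightarrow> real) \<Rightarrow> ('m \<Rightarrow> 'l \<Rightarrow> real) \<Rightarrow> 'l \<Rightarrow> real" where
  "act_prob M Q Z i = exp (weight M Q Z i) / (1 + exp (weight M Q Z i))"

text \<open>Control phase: broadcasters E C T k = links that have broadcast INTENT in one of
  the mini-slots 1..k (link i broadcasts in mini-slot T i + 1 unless it heard an INTENT
  from an interfering link in an earlier mini-slot).\<close>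
primrec broadcasters :: "'l set \<Rightarrow> ('l \<Rightarrow> 'l set) \<Rightarrow> ('l \<Rightarrow> nat) \<Rightarrow> nat \<Rightarrow> 'l set" where
  "broadcasters E C T 0 = {}"
| "broadcasters E C T (Suc k) = broadcasters E C T k \<union>
      {i \<in> E. T i = k \<and> (\<forall>j\<in>C i. j \<notin> broadcasters E C T k)}"

definition decision :: "'l set \<Rightarrow> ('l \<Rightarrow> 'l set) \<Rightarrow> nat \<Rightarrow> ('l \<Rightarrow> nat) \<Rightarrow> 'l \<Rightarrow> bool" where
  "decision E C W T i \<longleftrightarrow>
     (i \<in> broadcasters E C T W \<and> \<not> (\<exists>j\<in>C i. j \<in> broadcasters E C T W \<and> T j = T i))"

text \<open>One transition of the CSMA Markov chain (one super slot), from the set x of links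
  active in the previous super slot.\<close>
definition csma_step :: "'l set \<Rightarrow> ('l \<Rightarrow> 'l set) \<Rightarrow> nat \<Rightarrow> ('l \<Rightarrow> real) \<Rightarrow> 'l set \<Rightarrow> 'l set pmf" where
  "csma_step E C W p x =
     bind_pmf (Pi_pmf E 0 (\<lambda>_. pmf_of_set {0..<W})) (\<lambda>T.
     bind_pmf (Pi_pmf E False (\<lambda>i. bernoulli_pmf (p i))) (\<lambda>c.
     return_pmf {i \<in> E. if decision E C W T i
                        then (\<forall>j\<in>C i. j \<notin> x) \<and> c i
                        else i \<in> x}))"

definition feasible_schedule :: "'l set \<Rightarrow> ('l \<Rightarrow> 'l set) \<Rightarrow> 'l set \<Rightarrow> bool" where
  "feasible_schedule E C x \<longleftrightarrow> x \<subseteq> E \<and> (\<forall>i\<in>x. \<forall>j\<in>C i. j \<notin> x)"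

definition feasible_decision :: "'l set \<Rightarrow> ('l \<Rightarrow> 'l set) \<Rightarrow> 'm set \<Rightarrow> 'l set \<Rightarrow> ('m \<Rightarrow> 'l \<Rightarrow> nat) \<Rightarrow> bool" where
  "feasible_decision E C M x \<mu> \<longleftrightarrow> feasible_schedule E C x \<and> (\<forall>m i. \<mu> m i \<in> {0, 1}) \<and>
     (\<forall>i\<in>E. (\<Sum>m\<in>M. \<mu> m i) = (if i \<in> x then 1 else 0))"

definition Phi3 :: "'l set \<Rightarrow> 'm set \<Rightarrow> ('m \<Rightarrow> 'l \<Rightarrow> real) \<Rightarrow> ('m \<Rightarrow> 'l \<Rightarrow> real) \<Rightarrow> ('m \<Rightarrow> 'l \<Rightarrow> nat) \<Rightarrow> real" where
  "Phi3 E M Q Z \<mu> = (\<Sum>m\<in>M. \<Sum>i\<in>E. real (\<mu> m i) * (Q m i + Z m i))"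

definition Phi3_star :: "'l set \<Rightarrow> ('l \<Rightarrow> 'l set) \<Rightarrow> 'm set \<Rightarrow> ('m \<Rightarrow> 'l \<Rightarrow> real) \<Rightarrow> ('m \<Rightarrow> 'l \<Rightarrow> real) \<Rightarrow> real" where
  "Phi3_star E C M Q Z = Sup {Phi3 E M Q Z \<mu> | x \<mu>. feasible_decision E C M x \<mu>}"

definition served :: "('l \<Rightarrow> 'm) \<Rightarrow> 'l set \<Rightarrow> 'm \<Rightarrow> 'l \<Rightarrow> nat" where
  "served sel x m i = (if i \<in> x \<and> sel i = m then 1 else 0)"

end

theory Submission
  imports Defs
begin


lemma bc_char:
  "i \<in> broadcasters E C T k \<longleftrightarrow> i \<in> E \<and> T i < k \<and> (\<forall>j\<in>C i. j \<notin> broadcasters E C T (T i))"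
proof (induction k)
  case 0 then show ?case by simp
next
  case (Suc k) then show ?case by (auto simp: less_Suc_eq)
qed

lemma dec_indep:
  assumes sym: "\<forall>i\<in>E. \<forall>j\<in>C i. i \<in> C j" and CE: "\<forall>i\<in>E. C i \<subseteq> E"
    and di: "decision E C W T i" and dj: "decision E C W T j" and ji: "j \<in> C i"
  shows False
proof -
  from di have bi: "i \<in> broadcasters E C T W" and ni: "\<not> (\<exists>k\<in>C i. k \<in> broadcasters E C T W \<and> T k = T i)"
    by (auto simp: decision_def)
  from dj have bj: "j \<in> broadcasters E C T W" by (auto simp: decision_def)
  from bi have iE: "i \<in> E" and ci: "\<forall>k\<in>C i. k \<notin> broadcasters E C T (T i)" by (auto simp: bc_char[of i])
  from bj have jE: "j \<in> E" and cj: "\<forall>k\<in>C j. k \<notin> broadcasters E C T (T j)" by (auto simp: bc_char[of j])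
  have "T j \<noteq> T i" using ni ji bj by auto
  then consider "T j < T i" | "T i < T j" by linarith
  then show False
  proof cases
    case 1
    then have "j \<in> broadcasters E C T (T i)" using jE cj by (simp add: bc_char[of j])
    then show False using ci ji by auto
  next
    case 2
    have ij: "i \<in> C j" using sym iE ji by auto
    then have "i \<in> broadcasters E C T (T j)" using iE ci 2 by (simp add: bc_char[of i])
    then show False using cj ij by auto
  qed
qed


definition resl where
  "resl E C W T c x = {i\<in>E. if decision E C W T i then (\<forall>j\<in>C i. j\<notin>x) \<and> c i else i\<in>x}"

lemma step_pmf:
  "pmf (csma_step E C W p x) y = measure_pmf.expectation (Pi_pmf E 0 (\<lambda>_. pmf_of_set {0..<W}))
     (\<lambda>T. measure_pmf.prob (Pi_pmf E False (\<lambda>i. bernoulli_pmf (p i))) {c. resl E C W T c x = y})"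
  unfolding csma_step_def map_pmf_def[symmetric] pmf_bind pmf_map vimage_def resl_def
  by simp

lemma Pc:
  assumes fin: "finite E" and sym: "\<forall>i\<in>E. \<forall>j\<in>C i. i \<in> C j" and CE: "\<forall>i\<in>E. C i \<subseteq> E"
    and fx: "feasible_schedule E C x" and fy: "feasible_schedule E C y"
  shows "measure_pmf.prob (Pi_pmf E False (\<lambda>i. bernoulli_pmf (p i))) {c. resl E C W T c x = y}
     = (if \<forall>i\<in>E. \<not> decision E C W T i \<longrightarrow> (i\<in>x \<longleftrightarrow> i\<in>y)
        then (\<Prod>i\<in>E. if decision E C W T i \<and> (\<forall>j\<in>C i. j\<notin>x) then pmf (bernoulli_pmf (p i)) (i\<in>y) else 1)
        else 0)"
proof (cases "\<forall>i\<in>E. \<not> decision E C W T i \<longrightarrow> (i\<in>x \<longleftrightarrow> i\<in>y)")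
  case True
  note agr = True
  have xE: "x \<subseteq> E" and yE: "y \<subseteq> E" using fx fy by (auto simp: feasible_schedule_def)
  have nb: "\<forall>j\<in>C i. j \<in> x \<longleftrightarrow> j \<in> y" if "i \<in> E" "decision E C W T i" for i
  proof
    fix j assume j: "j \<in> C i"
    then have "j \<in> E" using CE that by auto
    moreover have "\<not> decision E C W T j" using dec_indep[OF sym CE that(2) _ j] by auto
    ultimately show "j \<in> x \<longleftrightarrow> j \<in> y" using True by auto
  qed
  have ev: "{c. resl E C W T c x = y} =
      Pi E (\<lambda>i. if decision E C W T i \<and> (\<forall>j\<in>C i. j\<notin>x) then {i\<in>y} else UNIV)"
  proof (intro set_eqI iffI)
    fix c assume "c \<in> {c. resl E C W T c x = y}"
    then have r: "resl E C W T c x = y" by simp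
    show "c \<in> Pi E (\<lambda>i. if decision E C W T i \<and> (\<forall>j\<in>C i. j\<notin>x) then {i\<in>y} else UNIV)"
    proof
      fix i assume iE: "i \<in> E"
      show "c i \<in> (if decision E C W T i \<and> (\<forall>j\<in>C i. j\<notin>x) then {i\<in>y} else UNIV)"
        using r iE unfolding resl_def by auto
    qed
  next
    fix c assume c: "c \<in> Pi E (\<lambda>i. if decision E C W T i \<and> (\<forall>j\<in>C i. j\<notin>x) then {i\<in>y} else UNIV)"
    have "resl E C W T c x = y"
    proof (intro set_eqI iffI)
      fix i assume "i \<in> resl E C W T c x"
      then have iE: "i \<in> E" and ii: "if decision E C W T i then (\<forall>j\<in>C i. j\<notin>x) \<and> c i else i\<in>x"
        unfolding resl_def by auto
      show "i \<in> y"
      proof (cases "decision E C W T i")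
        case True
        then have fr: "\<forall>j\<in>C i. j\<notin>x" and ci: "c i" using ii by auto
        have "c i \<in> {i\<in>y}" using c iE True fr by (auto simp: Pi_def)
        then show ?thesis using ci by auto
      next
        case False then show ?thesis using ii agr iE by auto
      qed
    next
      fix i assume iy: "i \<in> y"
      then have iE: "i \<in> E" using yE by auto
      show "i \<in> resl E C W T c x"
      proof (cases "decision E C W T i")
        case d: True
        have fr: "\<forall>j\<in>C i. j \<notin> y" using fy iy by (auto simp: feasible_schedule_def)
        then have frx: "\<forall>j\<in>C i. j \<notin> x" using nb[OF iE d] by auto
        have "c i \<in> {i\<in>y}" using c iE d frx by (auto simp: Pi_def)
        then have "c i" using iy by auto
        then show ?thesis using frx d iE unfolding resl_def by auto
      next
        case False then show ?thesis using iy agr iE unfolding resl_def by auto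
      qed
    qed
    then show "c \<in> {c. resl E C W T c x = y}" by simp
  qed
  show ?thesis
    unfolding ev using True
    by (simp add: measure_Pi_pmf_Pi[OF fin] measure_pmf_single if_distrib cong: if_cong)
next
  case False
  then obtain i where iE: "i \<in> E" and nd: "\<not> decision E C W T i" and ne: "\<not> (i\<in>x \<longleftrightarrow> i\<in>y)" by auto
  have "resl E C W T c x \<noteq> y" for c
  proof
    assume "resl E C W T c x = y"
    then have "i \<in> resl E C W T c x \<longleftrightarrow> i \<in> y" by simp
    then show False using iE nd ne unfolding resl_def by auto
  qed
  then have "{c. resl E C W T c x = y} = {}" by auto
  then show ?thesis using False by (simp only: if_False measure_empty)
qed


lemma free_eq:
  assumes sym: "\<forall>i\<in>E. \<forall>j\<in>C i. i \<in> C j" and CE: "\<forall>i\<in>E. C i \<subseteq> E"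
    and agr: "\<forall>i\<in>E. \<not> decision E C W T i \<longrightarrow> (i\<in>x \<longleftrightarrow> i\<in>y)"
    and iE: "i \<in> E" and d: "decision E C W T i"
  shows "(\<forall>j\<in>C i. j\<notin>x) \<longleftrightarrow> (\<forall>j\<in>C i. j\<notin>y)"
proof -
  have "j \<in> x \<longleftrightarrow> j \<in> y" if j: "j \<in> C i" for j
  proof -
    have "j \<in> E" using CE iE j by auto
    moreover have "\<not> decision E C W T j" using dec_indep[OF sym CE d _ j] by auto
    ultimately show ?thesis using agr by auto
  qed
  then show ?thesis by auto
qed

lemma db_T:
  assumes fin: "finite E" and sym: "\<forall>i\<in>E. \<forall>j\<in>C i. i \<in> C j" and CE: "\<forall>i\<in>E. C i \<subseteq> E"
    and fx: "feasible_schedule E C x" and fy: "feasible_schedule E C y"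
    and hp: "\<forall>i. p i = exp (w i) / (1 + exp (w i))"
  shows "(\<Prod>i\<in>E. if i \<in> x then exp (w i) else 1) *
           measure_pmf.prob (Pi_pmf E False (\<lambda>i. bernoulli_pmf (p i))) {c. resl E C W T c x = y}
       = (\<Prod>i\<in>E. if i \<in> y then exp (w i) else 1) *
           measure_pmf.prob (Pi_pmf E False (\<lambda>i. bernoulli_pmf (p i))) {c. resl E C W T c y = x}"
proof (cases "\<forall>i\<in>E. \<not> decision E C W T i \<longrightarrow> (i\<in>x \<longleftrightarrow> i\<in>y)")
  case True
  note agr = True
  have agr': "\<forall>i\<in>E. \<not> decision E C W T i \<longrightarrow> (i\<in>y \<longleftrightarrow> i\<in>x)" using agr by auto
  have p01: "0 < p i" "p i < 1" for i using hp[rule_format, of i]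
    by (auto simp: field_simps add_pos_pos)
  define S where "S i \<longleftrightarrow> decision E C W T i \<and> (\<forall>j\<in>C i. j\<notin>x)" for i
  have Sy: "decision E C W T i \<and> (\<forall>j\<in>C i. j\<notin>y) \<longleftrightarrow> S i" if "i \<in> E" for i
    using free_eq[OF sym CE agr that] unfolding S_def by auto
  have key: "(if i \<in> x then exp (w i) else 1) * (if S i then pmf (bernoulli_pmf (p i)) (i\<in>y) else 1)
     = (if i \<in> y then exp (w i) else 1) * (if S i then pmf (bernoulli_pmf (p i)) (i\<in>x) else 1)"
    if iE: "i \<in> E" for i
  proof (cases "S i")
    case True
    have nz: "1 + exp (w i) \<noteq> 0" by (smt (verit) exp_gt_zero)
    have b1: "pmf (bernoulli_pmf (p i)) True = p i" "pmf (bernoulli_pmf (p i)) False = 1 - p i"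
      using p01[of i] by auto
    show ?thesis using True hp[rule_format, of i] nz
      by (auto simp: b1 field_simps)
  next
    case False
    have "i \<in> x \<longleftrightarrow> i \<in> y"
    proof (cases "decision E C W T i")
      case True
      then have nfx: "\<not> (\<forall>j\<in>C i. j\<notin>x)" using False S_def by auto
      then have nfy: "\<not> (\<forall>j\<in>C i. j\<notin>y)" using free_eq[OF sym CE agr iE True] by auto
      have "i \<notin> x" using nfx fx by (auto simp: feasible_schedule_def)
      moreover have "i \<notin> y" using nfy fy by (auto simp: feasible_schedule_def)
      ultimately show ?thesis by auto
    qed (use agr iE in auto)
    then show ?thesis using False by simp
  qed
  have "(\<Prod>i\<in>E. if i \<in> x then exp (w i) else 1) *
          (\<Prod>i\<in>E. if S i then pmf (bernoulli_pmf (p i)) (i\<in>y) else 1)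
      = (\<Prod>i\<in>E. if i \<in> y then exp (w i) else 1) *
          (\<Prod>i\<in>E. if S i then pmf (bernoulli_pmf (p i)) (i\<in>x) else 1)"
    unfolding prod.distrib[symmetric] by (rule prod.cong[OF refl key])
  moreover have "(\<Prod>i\<in>E. if decision E C W T i \<and> (\<forall>j\<in>C i. j\<notin>y) then pmf (bernoulli_pmf (p i)) (i\<in>x) else 1)
      = (\<Prod>i\<in>E. if S i then pmf (bernoulli_pmf (p i)) (i\<in>x) else 1)"
    by (rule prod.cong[OF refl]) (simp add: Sy)
  ultimately show ?thesis
    unfolding Pc[OF fin sym CE fx fy] Pc[OF fin sym CE fy fx] using agr agr' by (simp add: S_def)
next
  case False
  then have F2: "\<not> (\<forall>i\<in>E. \<not> decision E C W T i \<longrightarrow> (i\<in>y \<longleftrightarrow> i\<in>x))" by auto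
  show ?thesis
    unfolding Pc[OF fin sym CE fx fy] Pc[OF fin sym CE fy fx] using False F2 by (simp only: if_False)
qed


lemma db:
  assumes fin: "finite E" and sym: "\<forall>i\<in>E. \<forall>j\<in>C i. i \<in> C j" and CE: "\<forall>i\<in>E. C i \<subseteq> E"
    and fx: "feasible_schedule E C x" and fy: "feasible_schedule E C y"
    and hp: "\<forall>i. p i = exp (w i) / (1 + exp (w i))"
  shows "(\<Prod>i\<in>E. if i \<in> x then exp (w i) else 1) * pmf (csma_step E C W p x) y
       = (\<Prod>i\<in>E. if i \<in> y then exp (w i) else 1) * pmf (csma_step E C W p y) x"
  unfolding step_pmf integral_mult_right_zero[symmetric]
  by (rule Bochner_Integration.integral_cong[OF refl], rule db_T[OF fin sym CE fx fy hp])

lemma pos_step: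
  assumes fin: "finite E" and CE: "\<forall>i\<in>E. C i \<subseteq> E" and irr: "\<forall>i\<in>E. i \<notin> C i"
    and fx: "feasible_schedule E C x" and ix: "i \<in> x" and W: "W \<ge> 2"
    and p01: "\<forall>i. 0 < p i \<and> p i < 1"
  shows "\<exists>x'. x' \<subset> x \<and> feasible_schedule E C x' \<and> pmf (csma_step E C W p x) x' > 0"
proof -
  have iE: "i \<in> E" using fx ix by (auto simp: feasible_schedule_def)
  define T0 where "T0 = (\<lambda>j. if j \<in> E \<and> j \<noteq> i then 1 else (0::nat))"
  define c0 where "c0 = (\<lambda>j::'a. False)"
  define x' where "x' = resl E C W T0 c0 x"
  have dec: "decision E C W T0 i"
  proof -
    have "T0 i = 0" by (simp add: T0_def)
    then have "i \<in> broadcasters E C T0 W" using iE W by (simp add: bc_char[of i])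
    moreover have "\<not> (\<exists>j\<in>C i. j \<in> broadcasters E C T0 W \<and> T0 j = T0 i)"
      using CE irr iE by (auto simp: T0_def)
    ultimately show ?thesis by (simp add: decision_def)
  qed
  have sub: "x' \<subseteq> x" using fx unfolding x'_def resl_def c0_def by (auto simp: feasible_schedule_def)
  moreover have "i \<notin> x'" using dec unfolding x'_def resl_def c0_def by auto
  ultimately have ps: "x' \<subset> x" using ix by auto
  have fx': "feasible_schedule E C x'" using fx sub by (auto simp: feasible_schedule_def)
  have T0s: "T0 \<in> set_pmf (Pi_pmf E 0 (\<lambda>_. pmf_of_set {0..<W}))"
    using W by (auto simp: set_Pi_pmf[OF fin] PiE_dflt_def T0_def)
  have c0s: "c0 \<in> set_pmf (Pi_pmf E False (\<lambda>i. bernoulli_pmf (p i)))"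
    using p01 by (auto simp: set_Pi_pmf[OF fin] PiE_dflt_def c0_def)
  have xs: "x' \<in> set_pmf (csma_step E C W p x)"
    unfolding csma_step_def set_bind_pmf set_return_pmf
    apply (rule UN_I[OF T0s])
    apply (rule UN_I[OF c0s])
    by (simp add: x'_def resl_def)
  have "pmf (csma_step E C W p x) x' > 0" using pmf_positive[OF xs] .
  then show ?thesis using ps fx' by blast
qed


lemma phi_served:
  assumes fM: "finite M" and fx: "x \<subseteq> E" and fE: "finite E"
    and sel: "\<forall>i\<in>E. sel i \<in> M \<and> Q (sel i) i + Z (sel i) i = weight M Q Z i"
  shows "Phi3 E M Q Z (served sel x) = (\<Sum>i\<in>x. weight M Q Z i)"
proof -
  have "Phi3 E M Q Z (served sel x) = (\<Sum>i\<in>E. \<Sum>m\<in>M. real (served sel x m i) * (Q m i + Z m i))"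
    unfolding Phi3_def by (rule sum.swap)
  also have "\<dots> = (\<Sum>i\<in>E. if i \<in> x then weight M Q Z i else 0)"
  proof (rule sum.cong[OF refl])
    fix i assume iE: "i \<in> E"
    have "(\<Sum>m\<in>M. real (served sel x m i) * (Q m i + Z m i))
        = (\<Sum>m\<in>M. if m = sel i then (if i \<in> x then Q m i + Z m i else 0) else 0)"
      by (rule sum.cong) (auto simp: served_def)
    also have "\<dots> = (if i \<in> x then weight M Q Z i else 0)"
      using sel iE fM by (simp add: sum.delta')
    finally show "(\<Sum>m\<in>M. real (served sel x m i) * (Q m i + Z m i)) = (if i \<in> x then weight M Q Z i else 0)" .
  qed
  also have "\<dots> = (\<Sum>i\<in>x. weight M Q Z i)"
    using fx fE by (simp add: sum.If_cases Int_absorb1)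
  finally show ?thesis .
qed

lemma phi_le:
  assumes fM: "finite M" and fE: "finite E"
    and fd: "feasible_decision E C M x \<mu>"
  shows "Phi3 E M Q Z \<mu> \<le> (\<Sum>i\<in>x. weight M Q Z i)"
proof -
  have xE: "x \<subseteq> E" using fd by (auto simp: feasible_decision_def feasible_schedule_def)
  have "Phi3 E M Q Z \<mu> = (\<Sum>i\<in>E. \<Sum>m\<in>M. real (\<mu> m i) * (Q m i + Z m i))"
    unfolding Phi3_def by (rule sum.swap)
  also have "\<dots> \<le> (\<Sum>i\<in>E. \<Sum>m\<in>M. real (\<mu> m i) * weight M Q Z i)"
  proof (intro sum_mono mult_left_mono)
    fix i m assume "m \<in> M"
    then show "Q m i + Z m i \<le> weight M Q Z i" unfolding weight_def using fM by (intro Max_ge) auto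
  qed simp
  also have "\<dots> = (\<Sum>i\<in>E. real (\<Sum>m\<in>M. \<mu> m i) * weight M Q Z i)"
    by (simp add: sum_distrib_right)
  also have "\<dots> = (\<Sum>i\<in>E. if i \<in> x then weight M Q Z i else 0)"
    using fd unfolding feasible_decision_def by (intro sum.cong) auto
  also have "\<dots> = (\<Sum>i\<in>x. weight M Q Z i)"
    using xE fE by (simp add: sum.If_cases Int_absorb1)
  finally show ?thesis .
qed

lemma g_exp:
  assumes "x \<subseteq> E" "finite E"
  shows "(\<Prod>i\<in>E. if i \<in> x then exp (w i) else 1) = exp (\<Sum>i\<in>x. w i)"
  using assms by (simp add: prod.If_cases Int_absorb1 exp_sum finite_subset)



theorem theorem3:
  fixes E :: "'l set" and C :: "'l \<Rightarrow> 'l set" and M :: "'m set"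
    and Q Z :: "'m \<Rightarrow> 'l \<Rightarrow> real" and W :: nat
    and \<pi> :: "'l set pmf" and sel :: "'l \<Rightarrow> 'm" and \<theta> \<delta> :: real
  assumes "finite E" and "finite M" and "M \<noteq> {}"
    and "\<forall>i\<in>E. C i \<subseteq> E" and "\<forall>i\<in>E. i \<notin> C i" and "\<forall>i\<in>E. \<forall>j\<in>C i. i \<in> C j"
    and "\<forall>m i. Q m i \<ge> 0" and "\<forall>m i. Z m i \<ge> 0"
    and "W \<ge> 2"
    and stationary: "bind_pmf \<pi> (csma_step E C W (act_prob M Q Z)) = \<pi>"
    and support: "set_pmf \<pi> \<subseteq> {x. feasible_schedule E C x}"
    and sel: "\<forall>i\<in>E. sel i \<in> M \<and> Q (sel i) i + Z (sel i) i = weight M Q Z i"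
    and "0 < \<theta>" and "\<theta> < 1" and "0 < \<delta>" and "\<delta> < 1"
    and "Phi3_star E C M Q Z \<ge> (1 / \<theta>) * (real (card E) * ln 2 + ln (1 / \<delta>))"
  shows "measure_pmf.prob \<pi> {x. Phi3 E M Q Z (served sel x) \<ge> (1 - \<theta>) * Phi3_star E C M Q Z}
           > 1 - \<delta>"
proof -
  note fin = assms(1) and fM = assms(2) and CE = assms(4) and irr = assms(5) and sym = assms(6)
    and W2 = assms(9) and th0 = assms(13) and th1 = assms(14) and d0 = assms(15) and d1 = assms(16)
    and big = assms(17)
  define w where "w = weight M Q Z"
  define p where "p = act_prob M Q Z"
  have hp: "\<forall>i. p i = exp (w i) / (1 + exp (w i))" by (simp add: p_def w_def act_prob_def)
  have p01: "\<forall>i. 0 < p i \<and> p i < 1"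
  proof
    fix i
    have "0 < exp (w i)" by simp
    then show "0 < p i \<and> p i < 1" using hp by (simp add: divide_less_eq add_pos_pos)
  qed
  define g where "g x = (\<Prod>i\<in>E. if i \<in> x then exp (w i) else 1)" for x :: "'l set"
  have gpos: "g x > 0" for x unfolding g_def by (intro prod_pos) auto
  define F where "F = {x. feasible_schedule E C x}"
  have FP: "F \<subseteq> Pow E" by (auto simp: F_def feasible_schedule_def)
  have finF: "finite F" using FP fin by (meson finite_Pow_iff finite_subset)
  have eF: "{} \<in> F" by (simp add: F_def feasible_schedule_def)
  define P where "P x y = pmf (csma_step E C W p x) y" for x y
  have dbP: "g x * P x y = g y * P y x" if "x \<in> F" "y \<in> F" for x y
    using db[OF fin sym CE _ _ hp, of x y W] that unfolding g_def P_def F_def by simp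
  have sumF: "(\<Sum>x\<in>F. pmf \<pi> x) = 1"
  proof -
    have "measure_pmf.prob \<pi> F = measure_pmf.prob \<pi> (F \<inter> set_pmf \<pi>)" by (simp add: measure_Int_set_pmf)
    also have "F \<inter> set_pmf \<pi> = UNIV \<inter> set_pmf \<pi>" using support F_def by auto
    also have "measure_pmf.prob \<pi> \<dots> = 1" using measure_pmf.prob_space[of \<pi>]
      by (simp only: measure_Int_set_pmf space_measure_pmf)
    finally show ?thesis using measure_measure_pmf_finite[OF finF] by simp
  qed
  have stat: "pmf \<pi> y = (\<Sum>x\<in>F. P x y * pmf \<pi> x)" for y
  proof -
    have "pmf \<pi> y = pmf (bind_pmf \<pi> (csma_step E C W p)) y" using stationary p_def by simp
    also have "\<dots> = (\<Sum>x\<in>F. P x y * pmf \<pi> x)"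
      unfolding pmf_bind P_def
      by (rule integral_measure_pmf_real[OF finF]) (use support F_def in auto)
    finally show ?thesis .
  qed
  define h where "h x = pmf \<pi> x / g x" for x
  have pig: "pmf \<pi> x = h x * g x" for x using gpos[of x] by (simp add: h_def)
  have harm: "h y = (\<Sum>x\<in>F. P y x * h x)" if yF: "y \<in> F" for y
  proof -
    have "pmf \<pi> y = (\<Sum>x\<in>F. h x * (g x * P x y))" using stat[of y] unfolding pig
      by (simp add: algebra_simps)
    also have "\<dots> = (\<Sum>x\<in>F. h x * (g y * P y x))" by (rule sum.cong[OF refl]) (simp add: dbP yF)
    also have "\<dots> = g y * (\<Sum>x\<in>F. P y x * h x)" by (simp add: sum_distrib_left algebra_simps)
    finally show ?thesis using gpos[of y] pig[of y] by (simp add: field_simps)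
  qed
  have sumP: "(\<Sum>x\<in>F. P y x) \<le> 1" for y
    unfolding P_def measure_measure_pmf_finite[OF finF, symmetric] by simp
  have hnn: "h x \<ge> 0" for x using gpos[of x] by (simp add: h_def)
  define hmax where "hmax = Max (h ` F)"
  have hle: "h x \<le> hmax" if "x \<in> F" for x using finF that by (simp add: hmax_def)
  have hmpos: "hmax > 0"
  proof (rule ccontr)
    assume "\<not> hmax > 0"
    then have "pmf \<pi> x = 0" if "x \<in> F" for x using hle[OF that] hnn[of x] gpos[of x] pig[of x] by simp
    then have "(\<Sum>x\<in>F. pmf \<pi> x) = 0" by simp
    then show False using sumF by simp
  qed
  have propg: "h x = hmax" if yF: "y \<in> F" and hy: "h y = hmax" and xF: "x \<in> F" and Px: "P y x > 0" for x y
  proof (rule ccontr)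
    assume "h x \<noteq> hmax"
    then have lt: "h x < hmax" using hle[OF xF] by simp
    have "(\<Sum>z\<in>F. P y z * h z) < (\<Sum>z\<in>F. P y z * hmax)"
    proof (rule sum_strict_mono_ex1[OF finF])
      show "\<forall>z\<in>F. P y z * h z \<le> P y z * hmax" using hle by (simp add: mult_left_mono P_def)
      show "\<exists>z\<in>F. P y z * h z < P y z * hmax" using xF lt Px by (intro bexI[of _ x]) auto
    qed
    also have "\<dots> = (\<Sum>z\<in>F. P y z) * hmax" by (simp add: sum_distrib_right)
    also have "\<dots> \<le> hmax" using sumP[of y] hmpos by (simp add: mult_le_cancel_right1)
    finally show False using harm[OF yF] hy by simp
  qed
  have fx: "finite x" if "x \<in> F" for x using that FP fin by (auto intro: finite_subset)
  have down: "z \<in> F \<Longrightarrow> h z = hmax \<Longrightarrow> h {} = hmax" for z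
  proof (induction "card z" arbitrary: z rule: less_induct)
    case less
    show ?case
    proof (cases "z = {}")
      case True then show ?thesis using less by simp
    next
      case False
      then obtain i where iz: "i \<in> z" by auto
      obtain z' where z': "z' \<subset> z" "feasible_schedule E C z'" "pmf (csma_step E C W p z) z' > 0"
        using pos_step[OF fin CE irr _ iz W2 p01] less(2) F_def by auto
      have z'F: "z' \<in> F" using z' F_def by simp
      have "h z' = hmax" using propg[OF less(2) less(3) z'F] z'(3) P_def by simp
      moreover have "card z' < card z" using psubset_card_mono[OF fx[OF less(2)] z'(1)] .
      ultimately show ?thesis using less(1) z'F by blast
    qed
  qed
  have "hmax \<in> h ` F" unfolding hmax_def using finF eF by (intro Max_in) auto
  then obtain y0 where "y0 \<in> F" "h y0 = hmax" by auto
  then have h0: "h {} = hmax" using down by blast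
  have up: "x \<in> F \<Longrightarrow> h x = hmax" for x
  proof (induction "card x" arbitrary: x rule: less_induct)
    case less
    show ?case
    proof (cases "x = {}")
      case True then show ?thesis using h0 by simp
    next
      case False
      then obtain i where ix: "i \<in> x" by auto
      obtain z' where z': "z' \<subset> x" "feasible_schedule E C z'" "pmf (csma_step E C W p x) z' > 0"
        using pos_step[OF fin CE irr _ ix W2 p01] less(2) F_def by auto
      have z'F: "z' \<in> F" using z' F_def by simp
      have "card z' < card x" using psubset_card_mono[OF fx[OF less(2)] z'(1)] .
      then have hz: "h z' = hmax" using less(1) z'F by blast
      have "g x * P x z' > 0" using gpos[of x] z'(3) P_def by simp
      then have "g z' * P z' x > 0" using dbP[OF less(2) z'F] by simp
      then have "P z' x > 0" using gpos[of z'] by (simp add: zero_less_mult_iff)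
      then show ?thesis using propg[OF z'F hz less(2)] by simp
    qed
  qed
  have piF: "pmf \<pi> x = hmax * g x" if "x \<in> F" for x using pig[of x] up[OF that] by simp
  define Zs where "Zs = (\<Sum>x\<in>F. g x)"
  have "(\<Sum>x\<in>F. pmf \<pi> x) = hmax * Zs" unfolding Zs_def sum_distrib_left
    by (rule sum.cong[OF refl]) (simp add: piF)
  then have hZ: "hmax * Zs = 1" using sumF by simp
  define Wt where "Wt x = (\<Sum>i\<in>x. w i)" for x
  have gW: "g x = exp (Wt x)" if "x \<in> F" for x
    unfolding g_def Wt_def using g_exp[of x E w] that FP fin by auto
  define \<Phi> where "\<Phi> = Phi3_star E C M Q Z"
  define Smax where "Smax = Max (Wt ` F)"
  have starle: "\<Phi> \<le> Smax"
    unfolding \<Phi>_def Phi3_star_def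
  proof (rule cSup_least)
    have "feasible_decision E C M {} (\<lambda>_ _. 0)" by (simp add: feasible_decision_def feasible_schedule_def)
    then show "{Phi3 E M Q Z \<mu> |x \<mu>. feasible_decision E C M x \<mu>} \<noteq> {}" by blast
  next
    fix v assume "v \<in> {Phi3 E M Q Z \<mu> |x \<mu>. feasible_decision E C M x \<mu>}"
    then obtain x \<mu> where v: "v = Phi3 E M Q Z \<mu>" and fd: "feasible_decision E C M x \<mu>" by blast
    have xF: "x \<in> F" using fd by (simp add: feasible_decision_def F_def)
    have "v \<le> Wt x" using phi_le[OF fM fin fd] v by (simp add: Wt_def w_def)
    also have "\<dots> \<le> Smax" unfolding Smax_def using finF xF by simp
    finally show "v \<le> Smax" .
  qed
  have "Smax \<in> Wt ` F" unfolding Smax_def using finF eF by (intro Max_in) auto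
  then obtain xo where xoF: "xo \<in> F" and xoW: "Wt xo = Smax" by auto
  have ZsL: "exp \<Phi> \<le> Zs"
  proof -
    have "exp \<Phi> \<le> exp (Wt xo)" using starle xoW by simp
    also have "\<dots> = g xo" using gW[OF xoF] by simp
    also have "\<dots> \<le> Zs" unfolding Zs_def using finF xoF gpos by (intro member_le_sum) (auto intro: less_imp_le)
    finally show ?thesis .
  qed
  have servedW: "Phi3 E M Q Z (served sel x) = Wt x" if "x \<in> F" for x
    using phi_served[OF fM _ fin sel, of x] that FP by (auto simp: Wt_def w_def)
  define G where "G = {x. Phi3 E M Q Z (served sel x) \<ge> (1 - \<theta>) * \<Phi>}"
  have probG: "measure_pmf.prob \<pi> G = (\<Sum>x\<in>F \<inter> G. pmf \<pi> x)"
  proof -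
    have "measure_pmf.prob \<pi> G = measure_pmf.prob \<pi> (G \<inter> set_pmf \<pi>)" by (simp add: measure_Int_set_pmf)
    also have "G \<inter> set_pmf \<pi> = (F \<inter> G) \<inter> set_pmf \<pi>" using support F_def by auto
    also have "measure_pmf.prob \<pi> \<dots> = measure_pmf.prob \<pi> (F \<inter> G)" by (simp add: measure_Int_set_pmf)
    also have "\<dots> = (\<Sum>x\<in>F \<inter> G. pmf \<pi> x)" using finF by (simp add: measure_measure_pmf_finite)
    finally show ?thesis .
  qed
  have split: "(\<Sum>x\<in>F \<inter> G. pmf \<pi> x) + (\<Sum>x\<in>F - G. pmf \<pi> x) = 1"
    using sumF sum.Int_Diff[OF finF, of "pmf \<pi>" G] by simp
  define n where "n = card E"
  have K: "\<theta> * \<Phi> \<ge> real n * ln 2 + ln (1 / \<delta>)"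
    using big th0 unfolding \<Phi>_def n_def by (simp add: field_simps)
  have ek: "2 ^ n * exp (- (\<theta> * \<Phi>)) \<le> \<delta>"
  proof -
    have "exp (- (\<theta> * \<Phi>)) \<le> exp (- (real n * ln 2 + ln (1 / \<delta>)))" using K by simp
    also have "\<dots> = \<delta> / 2 ^ n"
    proof -
      have e1: "exp (real n * ln 2) = 2 ^ n" by (simp add: exp_of_nat_mult)
      have e2: "exp (ln (1 / \<delta>)) = 1 / \<delta>" using d0 by simp
      show ?thesis unfolding exp_minus exp_add e1 e2 by simp
    qed
    finally show ?thesis by (simp add: field_simps)
  qed
  have bad: "(\<Sum>x\<in>F - G. pmf \<pi> x) < \<delta>"
  proof (cases "F - G = {}")
    case True then show ?thesis using d0 by (simp only: sum.empty)
  next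
    case False
    have "(\<Sum>x\<in>F - G. g x) < (\<Sum>x\<in>F - G. exp ((1 - \<theta>) * \<Phi>))"
    proof (rule sum_strict_mono)
      fix x assume x: "x \<in> F - G"
      then have "Wt x < (1 - \<theta>) * \<Phi>" using servedW[of x] by (auto simp: G_def)
      then show "g x < exp ((1 - \<theta>) * \<Phi>)" using gW[of x] x by simp
    qed (use finF False in auto)
    also have "\<dots> = real (card (F - G)) * exp ((1 - \<theta>) * \<Phi>)" by simp
    also have "\<dots> \<le> 2 ^ n * exp ((1 - \<theta>) * \<Phi>)"
    proof -
      have "card (F - G) \<le> card (Pow E)" using FP fin by (intro card_mono) auto
      then have "real (card (F - G)) \<le> 2 ^ n" using fin by (simp add: card_Pow n_def)
      then show ?thesis by (intro mult_right_mono) auto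
    qed
    finally have s1: "(\<Sum>x\<in>F - G. g x) < 2 ^ n * exp ((1 - \<theta>) * \<Phi>)" .
    have "(\<Sum>x\<in>F - G. pmf \<pi> x) = hmax * (\<Sum>x\<in>F - G. g x)"
      unfolding sum_distrib_left by (rule sum.cong[OF refl]) (simp add: piF)
    also have "\<dots> = (\<Sum>x\<in>F - G. g x) / Zs"
    proof -
      have "Zs \<noteq> 0" using hZ by auto
      then have "hmax = 1 / Zs" using hZ by (simp add: eq_divide_eq mult.commute)
      then show ?thesis by simp
    qed
    also have "\<dots> < 2 ^ n * exp ((1 - \<theta>) * \<Phi>) / Zs"
      using s1 ZsL by (intro divide_strict_right_mono) (auto intro: less_le_trans[OF exp_gt_zero])
    also have "\<dots> \<le> 2 ^ n * exp ((1 - \<theta>) * \<Phi>) / exp \<Phi>"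
    proof -
      have "0 < Zs" using ZsL exp_gt_zero[of \<Phi>] by linarith
      then show ?thesis using ZsL by (intro divide_left_mono) auto
    qed
    also have "\<dots> = 2 ^ n * exp (- (\<theta> * \<Phi>))"
    proof -
      have "exp ((1 - \<theta>) * \<Phi>) / exp \<Phi> = exp ((1 - \<theta>) * \<Phi> - \<Phi>)" by (rule exp_diff[symmetric])
      also have "(1 - \<theta>) * \<Phi> - \<Phi> = - (\<theta> * \<Phi>)" by (simp add: algebra_simps)
      finally have e: "exp ((1 - \<theta>) * \<Phi>) / exp \<Phi> = exp (- (\<theta> * \<Phi>))" .
      show ?thesis by (simp only: times_divide_eq_right[symmetric] e)
    qed
    also have "\<dots> \<le> \<delta>" by (rule ek)
    finally show ?thesis .
  qed
  show ?thesis using probG split bad unfolding G_def \<Phi>_def by simp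
qed

end
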